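(* Let $n\ge 1$ and let $f_1,\dots,f_n\in\mathcal{B}_c$. Let $X=(X_1,\dots,X_n)$ be a random vector in $\mathbb{R}^n$ (the $X_i$ possibly dependent) such that $P(|X_i|\ge u)\le f_i(u)$ for all $u\ge 0$ and all $i$. Let $g:\mathbb{R}^n\to\mathbb{R}$ be continuous and $t\in\mathbb{R}$. Suppose there exists $s_t\in(0,1]$ such that $$L(s_t)\in \partial_{SW}\, Q\big(g^{-1}[t,\infty)\big).$$ Then $P(g(X)\ge t)\le n\,s_t$.
   Context: $\mathcal{B}_c$ is the set of functions $f:[0,\infty)\to(0,\infty)$ that are continuous, strictly decreasing, satisfy $f(0)\ge 1$ and $\lim_{u\to\infty}f(u)=0$. For such $f_i$, $L(s)=(f_1^{-1}(s),\dots,f_n^{-1}(s))\in[0,\infty)^n$ for $s\in(0,1]$. $Q:\mathbb{R}^n\to[0,\infty)^n$ is $Q(x_1,\dots,x_n)=(|x_1|,\dots,|x_n|)$. For $x,y\in[0,\infty)^n$, write $x\le' y$ iff $x_i\le y_i$ for all $i$, and $x<'y$ iff $x\le' y$ and $x\ne y$. For a nonempty closed $V\subset[0,\infty)^n$, the southwest boundary is $\partial_{SW}V=\{x\in V:\ \text{there is no } x'\in V \text{ with } x'<'x\}$, i.e. the set of minimal elements of $V$. *)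

theory Defs
  imports "HOL-Probability.Probability"
begin

text \<open>The class B_c: functions on [0,\<infinity>) (represented as real functions, only their
  values on {0..} matter) that are continuous, strictly decreasing, positive,
  with f 0 \<ge> 1 and limit 0 at infinity.\<close>
definition Bc :: "(real \<Rightarrow> real) \<Rightarrow> bool" where
  "Bc f \<longleftrightarrow> continuous_on {0..} f \<and> strict_antimono_on {0..} f \<and>
     (\<forall>u\<ge>0. f u > 0) \<and> f 0 \<ge> 1 \<and> (f \<longlongrightarrow> 0) at_top"

definition finv :: "(real \<Rightarrow> real) \<Rightarrow> real \<Rightarrow> real" where
  "finv f s = (THE u. u \<ge> 0 \<and> f u = s)"

definition Lvec :: "('n::finite \<Rightarrow> real \<Rightarrow> real) \<Rightarrow> real \<Rightarrow> real ^ 'n" where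
  "Lvec f s = (\<chi> i. finv (f i) s)"

definition Qmap :: "real ^ 'n::finite \<Rightarrow> real ^ 'n" where
  "Qmap x = (\<chi> i. \<bar>x $ i\<bar>)"

definition cw_le :: "real ^ 'n::finite \<Rightarrow> real ^ 'n \<Rightarrow> bool" where
  "cw_le x y \<longleftrightarrow> (\<forall>i. x $ i \<le> y $ i)"

definition cw_less :: "real ^ 'n::finite \<Rightarrow> real ^ 'n \<Rightarrow> bool" where
  "cw_less x y \<longleftrightarrow> cw_le x y \<and> x \<noteq> y"

definition sw_boundary :: "(real ^ 'n::finite) set \<Rightarrow> (real ^ 'n) set" where
  "sw_boundary V = {x \<in> V. \<not> (\<exists>x'\<in>V. cw_less x' x)}"

end

theory Submission
  imports Defs
begin

lemma finv_prop:
  assumes B: "Bc f" and s: "0 < s" "s \<le> 1"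
  shows "finv f s \<ge> 0 \<and> f (finv f s) = s"
proof -
  have cont: "continuous_on {0..} f" and sm: "strict_antimono_on {0..} f"
    and f0: "f 0 \<ge> 1" and lim: "(f \<longlongrightarrow> 0) at_top"
    using B unfolding Bc_def by auto
  have "eventually (\<lambda>u. f u < s) at_top"
    using order_tendstoD(2)[OF lim s(1)] .
  then obtain b0 where b0: "\<And>u. u \<ge> b0 \<Longrightarrow> f u < s"
    by (auto simp: eventually_at_top_linorder)
  define b where "b = max b0 0"
  have fb: "f b \<le> s" using b0[of b] by (simp add: b_def)
  have cb: "continuous_on {0..b} f" using cont by (rule continuous_on_subset) auto
  have s0: "s \<le> f 0" using f0 s by linarith
  have b0': "0 \<le> b" by (simp add: b_def)
  obtain u where u: "0 \<le> u" "u \<le> b" "f u = s"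
    using IVT2'[OF fb s0 b0' cb] by blast
  have uniq: "v = u" if "v \<ge> 0" "f v = s" for v
  proof (rule ccontr)
    assume "v \<noteq> u"
    then have "v < u \<or> u < v" by auto
    then show False
    proof
      assume "v < u" then show False using monotone_onD[OF sm, of v u] that u by simp
    next
      assume "u < v" then show False using monotone_onD[OF sm, of u v] that u by simp
    qed
  qed
  have "finv f s = u" unfolding finv_def
    by (rule the_equality) (use u uniq in blast)+
  then show ?thesis using u by simp
qed

theorem theorem1:
  fixes M :: "'a measure" and X :: "'a \<Rightarrow> real ^ 'n::finite"
    and f :: "'n \<Rightarrow> real \<Rightarrow> real" and g :: "real ^ 'n \<Rightarrow> real"
    and t s :: real
  assumes "prob_space M"
    and "X \<in> borel_measurable M"
    and "\<And>i. Bc (f i)"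
    and "\<And>i u. u \<ge> 0 \<Longrightarrow> measure M {\<omega> \<in> space M. \<bar>X \<omega> $ i\<bar> \<ge> u} \<le> f i u"
    and "continuous_on UNIV g"
    and "0 < s" and "s \<le> 1"
    and "Lvec f s \<in> sw_boundary (Qmap ` (g -` {t..}))"
  shows "measure M {\<omega> \<in> space M. g (X \<omega>) \<ge> t} \<le> real CARD('n) * s"
proof -
  interpret prob_space M by fact
  define l where "l i = finv (f i) s" for i
  have l: "l i \<ge> 0" "f i (l i) = s" for i
    using finv_prop[OF assms(3) assms(6,7)] by (auto simp: l_def)
  define B where "B i = {\<omega> \<in> space M. \<bar>X \<omega> $ i\<bar> \<ge> l i}" for i
  have Xi: "(\<lambda>\<omega>. X \<omega> $ i) \<in> borel_measurable M" for i
  proof -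
    have "continuous_on UNIV (\<lambda>x::real^'n. x $ i)"
      by (intro continuous_on_component continuous_on_id)
    then have "(\<lambda>x::real^'n. x $ i) \<in> borel_measurable borel"
      by (rule borel_measurable_continuous_onI)
    then show ?thesis using assms(2) by (rule measurable_compose[rotated])
  qed
  have Bm: "B i \<in> sets M" for i
  proof -
    have h: "(\<lambda>\<omega>. \<bar>X \<omega> $ i\<bar>) \<in> borel_measurable M"
      using Xi[of i] by (rule borel_measurable_abs)
    have "(\<lambda>\<omega>. \<bar>X \<omega> $ i\<bar>) -` {l i..} \<inter> space M \<in> sets M"
      by (rule measurable_sets[OF h]) simp
    moreover have "B i = (\<lambda>\<omega>. \<bar>X \<omega> $ i\<bar>) -` {l i..} \<inter> space M"
      unfolding B_def by blast
    ultimately show ?thesis by simp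
  qed
  have gX: "(\<lambda>\<omega>. g (X \<omega>)) \<in> borel_measurable M"
    using borel_measurable_continuous_onI[OF assms(5)] assms(2) by (rule measurable_compose[rotated])
  have sub: "{\<omega> \<in> space M. g (X \<omega>) \<ge> t} \<subseteq> (\<Union>i. B i)"
  proof
    fix \<omega> assume w: "\<omega> \<in> {\<omega> \<in> space M. g (X \<omega>) \<ge> t}"
    show "\<omega> \<in> (\<Union>i. B i)"
    proof (rule ccontr)
      assume "\<omega> \<notin> (\<Union>i. B i)"
      then have lt: "\<bar>X \<omega> $ i\<bar> < l i" for i using w by (auto simp: B_def not_le)
      have "Qmap (X \<omega>) \<in> Qmap ` (g -` {t..})" using w by (intro imageI) simp
      moreover have "cw_less (Qmap (X \<omega>)) (Lvec f s)"
      proof -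
        have "Qmap (X \<omega>) $ undefined \<noteq> Lvec f s $ undefined"
          using lt[of undefined] by (simp add: Qmap_def Lvec_def l_def)
        then show ?thesis using lt
          by (auto simp: cw_less_def cw_le_def Qmap_def Lvec_def l_def less_imp_le fun_eq_iff)
      qed
      moreover have "\<not> (\<exists>x'\<in>Qmap ` (g -` {t..}). cw_less x' (Lvec f s))"
        using assms(8) unfolding sw_boundary_def by blast
      ultimately show False by blast
    qed
  qed
  have "measure M {\<omega> \<in> space M. g (X \<omega>) \<ge> t} \<le> measure M (\<Union>i. B i)"
    using sub Bm by (intro finite_measure_mono) auto
  also have "\<dots> \<le> (\<Sum>i\<in>UNIV. measure M (B i))"
    using Bm by (intro finite_measure_subadditive_finite) auto
  also have "\<dots> \<le> (\<Sum>i\<in>(UNIV::'n set). s)"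
  proof (intro sum_mono)
    fix i
    show "measure M (B i) \<le> s" using assms(4)[of "l i" i] l(1)[of i] l(2)[of i] by (simp add: B_def)
  qed
  finally show ?thesis by simp
qed

end
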